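(* Let $m,n$ be distinct positive integers with greatest common divisor $\ell$. Then in $\mathbb{Q}((T))$, $$\mathbf{B}(mT)\mathbf{B}(nT)=\mathbf{B}^2(\ell T)+mT\,\mathbf{B}(nT)\,g_{n,m}(e^T)+nT\,\mathbf{B}(mT)\,g_{m,n}(e^T).$$
   Context: $\mathbf{B}(T)=T/(e^T-1)\in\mathbb{Q}[[T]]$, $\mathbf{B}(cT)=cT/(e^{cT}-1)$ for $0\ne c\in\mathbb{Q}$, and $\mathbf{B}^2(\ell T)=(\mathbf{B}(\ell T))^2$. The polynomials $g_{m,n}\in\mathbb{Q}[X]$ are defined as follows. For distinct coprime positive integers $m,n$, $g_{m,n}$ and $g_{n,m}$ are the (unique) polynomials with $\deg g_{m,n}<m-1$ and $\deg g_{n,m}<n-1$ such that $$\frac{1}{(X-1)(1+X+\cdots+X^{m-1})(1+X+\cdots+X^{n-1})}=\frac{1}{mn(X-1)}+\frac{g_{n,m}}{1+X+\cdots+X^{n-1}}+\frac{g_{m,n}}{1+X+\cdots+X^{m-1}}$$ (so in particular $g_{1,m}=0$). For general distinct positive integers $m,n$ with greatest common divisor $\ell$, set $g_{n,m}=g_{n/\ell,m/\ell}(X^\ell)$ and $g_{m,n}=g_{m/\ell,n/\ell}(X^\ell)$. *)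

theory Defs
  imports "HOL-Computational_Algebra.Computational_Algebra"
begin

text \<open>B(cT) = cT/(e^{cT}-1) as a formal power series over the rationals
  (division in fps is exact here since e^{cT}-1 has subdegree 1 for c nonzero).\<close>
definition Bfps :: "rat \<Rightarrow> rat fps" where
  "Bfps c = (fps_const c * fps_X) / (fps_exp c - 1)"

definition Psum :: "nat \<Rightarrow> rat poly" where
  "Psum k = (\<Sum>i<k. monom 1 i)"

definition deg_lt :: "rat poly \<Rightarrow> nat \<Rightarrow> bool" where
  "deg_lt p k \<longleftrightarrow> p = 0 \<or> degree p < k"

text \<open>For coprime a, b: the pair (g_{a,b}, g_{b,a}) characterised by the partial fraction
  identity 1/((X-1)P_a P_b) = 1/(ab(X-1)) + g_{b,a}/P_b + g_{a,b}/P_a, written after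
  multiplication by the nonzero polynomial (X-1) P_a P_b.\<close>
definition g_pair :: "nat \<Rightarrow> nat \<Rightarrow> rat poly \<times> rat poly" where
  "g_pair a b = (THE p. deg_lt (fst p) (a - 1) \<and> deg_lt (snd p) (b - 1) \<and>
      1 = smult (1 / (of_nat a * of_nat b)) (Psum a * Psum b)
          + snd p * [:-1, 1:] * Psum a + fst p * [:-1, 1:] * Psum b)"

definition g_cop :: "nat \<Rightarrow> nat \<Rightarrow> rat poly" where
  "g_cop a b = fst (g_pair a b)"

definition gpoly :: "nat \<Rightarrow> nat \<Rightarrow> rat poly" where
  "gpoly m n = (let l = gcd m n in pcompose (g_cop (m div l) (n div l)) (monom 1 l))"

definition eval_expT :: "rat poly \<Rightarrow> rat fps" where
  "eval_expT p = poly (map_poly fps_const p) (fps_exp 1)"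

end

theory Submission
  imports Defs
begin

abbreviation X1 :: "rat poly" where "X1 \<equiv> [:-1, 1:]"

lemma coeff_Psum: "coeff (Psum k) i = (if i < k then 1 else 0)"
  by (simp add: Psum_def coeff_sum coeff_monom)

lemma X1_monom: "X1 = monom 1 1 - 1"
  by (simp add: poly_eq_iff coeff_monom coeff_pCons split: nat.split)

lemma Psum_X1: "Psum k * X1 = monom 1 k - 1"
proof (induction k)
  case 0 thus ?case by (simp add: Psum_def)
next
  case (Suc k)
  have "Psum (Suc k) = Psum k + monom 1 k" by (simp add: Psum_def)
  hence "Psum (Suc k) * X1 = Psum k * X1 + monom 1 k * (monom 1 1 - 1)"
    by (simp add: X1_monom distrib_right)
  also have "\<dots> = monom 1 (Suc k) - 1" using Suc by (simp add: right_diff_distrib mult_monom)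
  finally show ?case .
qed

lemma poly_Psum1: "poly (Psum k) 1 = of_nat k"
  by (simp add: Psum_def poly_sum poly_monom)

lemma Psum_ne0: "0 < k \<Longrightarrow> Psum k \<noteq> 0"
  using poly_Psum1[of k] by auto

lemma degree_Psum: "0 < k \<Longrightarrow> degree (Psum k) = k - 1"
proof (rule antisym)
  assume "0 < k"
  show "degree (Psum k) \<le> k - 1" by (rule degree_le) (auto simp add: coeff_Psum)
  show "k - 1 \<le> degree (Psum k)" by (rule le_degree) (simp add: coeff_Psum \<open>0<k\<close>)
qed

lemma Psum_Suc': "Psum (Suc k) = 1 + monom 1 1 * Psum k"
  by (auto simp add: poly_eq_iff coeff_Psum coeff_monom_mult)

lemma X1_ne0: "X1 \<noteq> 0" by simp

lemma Psum_dvd_mult: "\<exists>S. Psum (a * s) = Psum a * S"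
proof -
  have "(monom 1 a)^s = (monom (1::rat) (a*s))" by (simp add: monom_power)
  hence "Psum (a*s) * X1 = (monom 1 a)^s - 1" by (simp only: Psum_X1)
  also have "\<dots> = (monom 1 a - 1) * (\<Sum>i<s. (monom 1 a)^i)" by (rule power_diff_1_eq)
  also have "\<dots> = (Psum a * (\<Sum>i<s. (monom 1 a)^i)) * X1" by (simp add: Psum_X1[symmetric] algebra_simps)
  finally have "Psum (a*s) = Psum a * (\<Sum>i<s. (monom 1 a)^i)" using X1_ne0 mult_right_cancel by blast
  thus ?thesis by blast
qed

lemma Psum_bezout:
  assumes "0 < a" "coprime a b"
  shows "\<exists>u v. u * Psum a + v * Psum b = 1"
proof -
  obtain s t where st: "a * s = b * t + gcd a b" using bezout_nat[of a b] assms by auto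
  hence st: "a * s = Suc (b * t)" using assms by simp
  obtain S1 where S1: "Psum (a*s) = Psum a * S1" using Psum_dvd_mult by blast
  obtain S2 where S2: "Psum (b*t) = Psum b * S2" using Psum_dvd_mult by blast
  have "Psum (a*s) = 1 + monom 1 1 * Psum (b*t)" using st Psum_Suc' by simp
  hence "S1 * Psum a + (- (monom 1 1 * S2)) * Psum b = 1" using S1 S2 by (simp add: algebra_simps)
  thus ?thesis by blast
qed

definition GP :: "nat \<Rightarrow> nat \<Rightarrow> rat poly \<times> rat poly \<Rightarrow> bool" where
  "GP a b p \<longleftrightarrow> deg_lt (fst p) (a - 1) \<and> deg_lt (snd p) (b - 1) \<and>
      1 = smult (1 / (of_nat a * of_nat b)) (Psum a * Psum b)
          + snd p * [:-1, 1:] * Psum a + fst p * [:-1, 1:] * Psum b"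

lemma g_pair_GP: "g_pair a b = (THE p. GP a b p)"
  unfolding g_pair_def GP_def ..

lemma deg_lt_diff: "deg_lt p k \<Longrightarrow> deg_lt q k \<Longrightarrow> deg_lt (p - q) k"
  unfolding deg_lt_def
proof -
  assume p: "p = 0 \<or> degree p < k" and q: "q = 0 \<or> degree q < k"
  show "p - q = 0 \<or> degree (p - q) < k"
  proof (cases "k = 0")
    case True thus ?thesis using p q by auto
  next
    case False
    have "degree p \<le> k - 1" "degree q \<le> k - 1" using p q False by auto
    hence "degree (p - q) \<le> k - 1" by (rule degree_diff_le)
    thus ?thesis using False by auto
  qed
qed

lemma deg_lt_mult: "deg_lt p j \<Longrightarrow> q \<noteq> 0 \<Longrightarrow> deg_lt (p * q) (j + degree q)"
  unfolding deg_lt_def by (cases "p = 0") (auto simp: degree_mult_eq)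

lemma GP_ex1:
  assumes "0 < a" "0 < b" "coprime a b"
  shows "\<exists>!p. GP a b p"
proof -
  obtain u v where uv: "u * Psum a + v * Psum b = 1" using Psum_bezout assms by blast
  have Pa: "Psum a \<noteq> 0" "degree (Psum a) = a - 1" using assms Psum_ne0 degree_Psum by auto
  have Pb: "Psum b \<noteq> 0" "degree (Psum b) = b - 1" using assms Psum_ne0 degree_Psum by auto
  define c :: rat where "c = 1 / (of_nat a * of_nat b)"
  define F where "F = 1 - smult c (Psum a * Psum b)"
  have "poly F 1 = 0" using assms by (simp add: F_def c_def poly_Psum1)
  then obtain R where R: "F = X1 * R" using poly_eq_0_iff_dvd[of F 1] by (auto elim: dvdE)
  have "deg_lt F (a - 1 + (b - 1) + 1)"
  proof -
    have "deg_lt 1 (a - 1 + (b - 1) + 1)" by (simp add: deg_lt_def)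
    moreover have "deg_lt (smult c (Psum a * Psum b)) (a - 1 + (b - 1) + 1)"
      using Pa Pb by (auto simp: deg_lt_def degree_mult_eq)
    ultimately show ?thesis unfolding F_def by (rule deg_lt_diff)
  qed
  hence Rdeg: "deg_lt R (a - 1 + (b - 1))"
  proof (cases "R = 0")
    case False
    have d: "degree (X1 * R) = degree X1 + degree R" by (rule degree_mult_eq[OF X1_ne0 False])
    have "X1 * R \<noteq> 0" using False X1_ne0 by (simp only: mult_eq_0_iff) simp
    moreover assume "deg_lt F (a - 1 + (b - 1) + 1)"
    ultimately show ?thesis using d R unfolding deg_lt_def by simp
  qed (simp add: deg_lt_def)
  define g where "g = (R * v) mod Psum a"
  define h where "h = R * u + ((R * v) div Psum a) * Psum b"
  have gdeg: "deg_lt g (a - 1)" using degree_mod_less[OF Pa(1), of "R*v"] Pa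
    by (auto simp: g_def deg_lt_def)
  have hg: "h * Psum a + g * Psum b = R"
  proof -
    have d: "R * v = ((R*v) div Psum a) * Psum a + g" by (simp add: g_def)
    have "h * Psum a + g * Psum b = R * (u * Psum a + v * Psum b)"
      unfolding h_def using d by algebra
    thus ?thesis using uv by simp
  qed
  have hdeg: "deg_lt h (b - 1)"
  proof (cases "h = 0")
    case True thus ?thesis by (simp add: deg_lt_def)
  next
    case False
    have "deg_lt (g * Psum b) (a - 1 + (b - 1))" using deg_lt_mult[OF gdeg Pb(1)] Pb by simp
    hence "deg_lt (R - g * Psum b) (a - 1 + (b - 1))" using Rdeg deg_lt_diff by blast
    moreover have "R - g * Psum b = h * Psum a" using hg by (simp add: algebra_simps)
    ultimately have "deg_lt (h * Psum a) (a - 1 + (b - 1))" by simp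
    thus ?thesis using False Pa by (auto simp: deg_lt_def degree_mult_eq)
  qed
  have ex: "GP a b (g, h)"
  proof -
    have "1 = smult c (Psum a * Psum b) + F" by (simp add: F_def)
    also have "F = h * X1 * Psum a + g * X1 * Psum b" using hg R by (simp add: algebra_simps)
    finally show ?thesis using gdeg hdeg by (simp add: GP_def c_def add.assoc)
  qed
  have uniq: "p = (g, h)" if "GP a b p" for p
  proof -
    obtain g' h' where p: "p = (g', h')" by (cases p)
    have g': "deg_lt g' (a - 1)" and
      e: "1 = smult c (Psum a * Psum b) + h' * X1 * Psum a + g' * X1 * Psum b"
      using that by (auto simp: GP_def p c_def)
    have e0: "1 = smult c (Psum a * Psum b) + h * X1 * Psum a + g * X1 * Psum b"
      using ex by (auto simp: GP_def c_def)
    have "X1 * ((h - h') * Psum a + (g - g') * Psum b) = 0"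
      using e e0 by algebra
    hence "(h - h') * Psum a + (g - g') * Psum b = 0" using X1_ne0 by (simp only: mult_eq_0_iff) blast
    hence E: "(h - h') * Psum a = - ((g - g') * Psum b)" by (simp only: eq_neg_iff_add_eq_0)
    have "g - g' = (g - g') * (u * Psum a + v * Psum b)" using uv by simp
    also have "\<dots> = ((g - g') * u - v * (h - h')) * Psum a"
      using E by algebra
    finally have "Psum a dvd (g - g')" by (metis dvd_triv_right)
    moreover have "deg_lt (g - g') (a - 1)" using gdeg g' deg_lt_diff by blast
    ultimately have "g - g' = 0"
    proof (rule_tac ccontr)
      assume d: "Psum a dvd (g - g')" "deg_lt (g - g') (a - 1)" "g - g' \<noteq> 0"
      hence "degree (Psum a) \<le> degree (g - g')" by (intro dvd_imp_degree_le) auto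
      thus False using d Pa unfolding deg_lt_def by linarith
    qed
    hence "g' = g" by simp
    with E have "(h - h') * Psum a = 0" by simp
    hence "h' = h" using Pa by simp
    thus ?thesis using p \<open>g' = g\<close> by simp
  qed
  show ?thesis using ex uniq by blast
qed

lemma GP_swap: "GP a b p \<Longrightarrow> GP b a (snd p, fst p)"
  unfolding GP_def by (simp add: mult.commute add.commute add.left_commute mult.left_commute)

lemma g_pair_facts:
  assumes "0 < a" "0 < b" "coprime a b"
  shows "GP a b (g_pair a b)" "g_pair b a = (snd (g_pair a b), fst (g_pair a b))"
proof -
  show 1: "GP a b (g_pair a b)" unfolding g_pair_GP using GP_ex1[OF assms] by (rule theI')
  have "\<exists>!p. GP b a p" using GP_ex1 assms by (simp add: coprime_commute)
  moreover have "GP b a (snd (g_pair a b), fst (g_pair a b))" using GP_swap[OF 1] .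
  ultimately show "g_pair b a = (snd (g_pair a b), fst (g_pair a b))"
    unfolding g_pair_GP by (metis theI')
qed

definition ev :: "rat fps \<Rightarrow> rat poly \<Rightarrow> rat fps" where
  "ev Y p = poly (map_poly fps_const p) Y"

lemma ev_pCons: "ev Y (pCons a p) = fps_const a + Y * ev Y p"
  by (simp add: ev_def map_poly_pCons)

lemma ev_0[simp]: "ev Y 0 = 0" by (simp add: ev_def)

lemma ev_const: "ev Y [:a:] = fps_const a" by (simp add: ev_pCons)

lemma ev_1[simp]: "ev Y 1 = 1" by (simp add: ev_def)

lemma ev_add: "ev Y (p + q) = ev Y p + ev Y q"
proof (induction p q rule: poly_induct2)
  case 0 thus ?case by simp
next
  case (pCons a p b q) thus ?case by (simp add: ev_pCons algebra_simps)
qed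

lemma ev_smult: "ev Y (smult c p) = fps_const c * ev Y p"
  by (induction p) (simp_all add: ev_pCons algebra_simps)

lemma ev_mult: "ev Y (p * q) = ev Y p * ev Y q"
  by (induction p) (simp_all add: ev_pCons ev_add ev_smult algebra_simps)

lemma ev_uminus: "ev Y (- p) = - ev Y p"
  using ev_smult[of Y "-1" p] by (simp del: fps_const_neg add: fps_const_neg[symmetric])

lemma ev_diff: "ev Y (p - q) = ev Y p - ev Y q"
  using ev_add[of Y p "-q"] ev_uminus[of Y q] by simp

lemma ev_monom: "ev Y (monom 1 k) = Y ^ k"
  by (simp add: ev_def map_poly_monom poly_monom)

lemma ev_X1: "ev Y X1 = Y - 1"
  by (simp add: ev_pCons)

lemma ev_pcompose: "ev Y (pcompose q (monom 1 l)) = ev (Y ^ l) q"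
  by (induction q) (simp_all add: pcompose_pCons ev_add ev_mult ev_const ev_monom ev_pCons)

lemma ev_Psum: "ev Y (Psum k) * (Y - 1) = Y ^ k - 1"
proof -
  have "ev Y (Psum k * X1) = ev Y (monom 1 k - 1)" by (simp only: Psum_X1)
  thus ?thesis by (simp only: ev_mult ev_diff ev_monom ev_X1 ev_1)
qed

lemma Bfps_mult:
  assumes "c \<noteq> 0"
  shows "Bfps c * (fps_exp c - 1) = fps_const c * fps_X"
proof -
  have g1: "(fps_exp c - 1) $ 1 \<noteq> 0" using assms by simp
  hence gne: "fps_exp c - 1 \<noteq> 0" by auto
  have "subdegree (fps_exp c - 1) \<le> 1" using g1 by (rule subdegree_leI)
  moreover have "1 \<le> subdegree (fps_const c * fps_X)"
  proof (rule subdegree_geI)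
    have "(fps_const c * fps_X) $ 1 \<noteq> 0" using assms by simp
    thus "fps_const c * fps_X \<noteq> 0" by auto
  qed simp
  ultimately show ?thesis unfolding Bfps_def using fps_times_divide_eq[OF gne] by simp
qed

theorem mainTheorem4:
  fixes m n :: nat
  assumes "0 < m" and "0 < n" and "m \<noteq> n"
  shows "Bfps (of_nat m) * Bfps (of_nat n) =
           (Bfps (of_nat (gcd m n)))\<^sup>2
         + fps_const (of_nat m) * fps_X * Bfps (of_nat n) * eval_expT (gpoly n m)
         + fps_const (of_nat n) * fps_X * Bfps (of_nat m) * eval_expT (gpoly m n)"
proof -
  define l where "l = gcd m n"
  have l0: "0 < l" using assms by (simp add: l_def)
  define a where "a = m div l"
  define b where "b = n div l"
  have ma: "m = l * a" and nb: "n = l * b" by (simp_all add: a_def b_def l_def)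
  have a0: "0 < a" "0 < b" using ma nb assms by auto
  have cop: "coprime a b" unfolding a_def b_def l_def using div_gcd_coprime assms by auto
  have gcd_nm: "gcd n m = l" by (simp add: l_def gcd.commute)
  define G where "G = fst (g_pair a b)"
  define H where "H = snd (g_pair a b)"
  have gm: "gpoly m n = pcompose G (monom 1 l)"
    unfolding gpoly_def g_cop_def Let_def by (simp add: l_def a_def b_def G_def)
  have gn: "gpoly n m = pcompose H (monom 1 l)"
    unfolding gpoly_def g_cop_def Let_def using g_pair_facts(2)[OF a0 cop]
    by (simp add: gcd_nm a_def b_def H_def)
  define E where "E = fps_exp (1::rat)"
  define Y where "Y = E ^ l"
  have expk: "\<And>k. fps_exp (of_nat k :: rat) = E ^ k" by (simp add: E_def fps_exp_power_mult)
  have evE: "\<And>p. eval_expT p = ev E p" by (simp add: eval_expT_def ev_def E_def)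
  have eG: "eval_expT (gpoly m n) = ev Y G" by (simp add: gm evE ev_pcompose Y_def)
  have eH: "eval_expT (gpoly n m) = ev Y H" by (simp add: gn evE ev_pcompose Y_def)
  define Pa where "Pa = ev Y (Psum a)"
  define Pb where "Pb = ev Y (Psum b)"
  define cm where "cm = fps_const (of_nat m :: rat)"
  define cn where "cn = fps_const (of_nat n :: rat)"
  define cl where "cl = fps_const (of_nat l :: rat)"
  have Em: "E ^ m - 1 = Pa * (Y - 1)" by (simp add: Pa_def ev_Psum ma power_mult Y_def)
  have En: "E ^ n - 1 = Pb * (Y - 1)" by (simp add: Pb_def ev_Psum nb power_mult Y_def)
  have Bm: "Bfps (of_nat m) * (Pa * (Y - 1)) = cm * fps_X"
    using Bfps_mult[of "of_nat m"] assms by (simp add: expk Em cm_def)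
  have Bn: "Bfps (of_nat n) * (Pb * (Y - 1)) = cn * fps_X"
    using Bfps_mult[of "of_nat n"] assms by (simp add: expk En cn_def)
  have Bl: "Bfps (of_nat l) * (Y - 1) = cl * fps_X"
    using Bfps_mult[of "of_nat l"] l0 by (simp add: expk cl_def Y_def)
  have GPab: "GP a b (g_pair a b)" using g_pair_facts(1)[OF a0 cop] .
  hence pid: "1 = smult (1 / (of_nat a * of_nat b)) (Psum a * Psum b) + H * X1 * Psum a + G * X1 * Psum b"
    unfolding GP_def G_def H_def by simp
  have id: "1 = fps_const (1 / (of_nat a * of_nat b)) * Pa * Pb + ev Y H * (Y - 1) * Pa + ev Y G * (Y - 1) * Pb"
  proof -
    have "ev Y 1 = ev Y (smult (1 / (of_nat a * of_nat b)) (Psum a * Psum b) + H * X1 * Psum a + G * X1 * Psum b)"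
      using pid by (rule arg_cong)
    thus ?thesis by (simp only: ev_1 ev_add ev_mult ev_smult ev_X1 Pa_def Pb_def mult.assoc)
  qed
  have cc: "cl ^ 2 = cm * cn * fps_const (1 / (of_nat a * of_nat b))"
  proof -
    have e: "(of_nat m :: rat) * of_nat n = (of_nat l)^2 * (of_nat a * of_nat b)"
      by (simp add: ma nb power2_eq_square mult_ac)
    have "(of_nat a :: rat) * of_nat b \<noteq> 0" using a0 by simp
    hence "(of_nat l :: rat) ^ 2 = of_nat m * of_nat n * (1 / (of_nat a * of_nat b))"
      by (simp only: e) simp
    thus ?thesis by (simp add: cl_def cm_def cn_def fps_const_power)
  qed
  have Y1: "Y - 1 \<noteq> 0"
  proof
    assume "Y - 1 = 0"
    with Bl have "cl * fps_X = 0" by simp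
    hence "(cl * fps_X) $ 1 = 0" by simp
    thus False using l0 by (simp add: cl_def)
  qed
  have Pa0: "Pa \<noteq> 0"
  proof
    assume "Pa = 0"
    with Bm have "cm * fps_X = 0" by simp
    hence "(cm * fps_X) $ 1 = 0" by simp
    thus False using assms by (simp add: cm_def)
  qed
  have Pb0: "Pb \<noteq> 0"
  proof
    assume "Pb = 0"
    with Bn have "cn * fps_X = 0" by simp
    hence "(cn * fps_X) $ 1 = 0" by simp
    thus False using assms by (simp add: cn_def)
  qed
  define K where "K = (Y - 1)^2 * Pa * Pb"
  have K0: "K \<noteq> 0" using Y1 Pa0 Pb0 by (simp add: K_def)
  define Bm' where "Bm' = Bfps (of_nat m)"
  define Bn' where "Bn' = Bfps (of_nat n)"
  define Bl' where "Bl' = Bfps (of_nat l)"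
  have L: "Bm' * Bn' * K = cm * fps_X * (cn * fps_X)"
  proof -
    have "Bm' * Bn' * K = (Bm' * (Pa * (Y - 1))) * (Bn' * (Pb * (Y - 1)))"
      unfolding K_def by (simp add: power2_eq_square mult_ac)
    thus ?thesis using Bm Bn by (simp add: Bm'_def Bn'_def)
  qed
  have R: "(Bl'^2 + cm * fps_X * Bn' * ev Y H + cn * fps_X * Bm' * ev Y G) * K = cm * fps_X * (cn * fps_X)"
  proof -
    define c where "c = fps_const (1 / (of_nat a * of_nat b) :: rat)"
    have t1: "Bl'^2 * K = cm * fps_X * (cn * fps_X) * (c * Pa * Pb)"
    proof -
      have "Bl'^2 * K = (Bl' * (Y - 1))^2 * Pa * Pb" by (simp add: K_def power2_eq_square mult_ac)
      also have "\<dots> = cl^2 * fps_X^2 * Pa * Pb" using Bl by (simp add: Bl'_def power_mult_distrib)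
      also have "\<dots> = cm * fps_X * (cn * fps_X) * (c * Pa * Pb)" using cc by (simp add: c_def power2_eq_square mult_ac)
      finally show ?thesis .
    qed
    have t2: "cm * fps_X * Bn' * ev Y H * K = cm * fps_X * (cn * fps_X) * (ev Y H * (Y - 1) * Pa)"
    proof -
      have "cm * fps_X * Bn' * ev Y H * K = cm * fps_X * ev Y H * (Bn' * (Pb * (Y - 1))) * (Y - 1) * Pa"
        by (simp add: K_def power2_eq_square mult_ac)
      also have "\<dots> = cm * fps_X * (cn * fps_X) * (ev Y H * (Y - 1) * Pa)" using Bn by (simp add: Bn'_def mult_ac)
      finally show ?thesis .
    qed
    have t3: "cn * fps_X * Bm' * ev Y G * K = cm * fps_X * (cn * fps_X) * (ev Y G * (Y - 1) * Pb)"
    proof -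
      have "cn * fps_X * Bm' * ev Y G * K = cn * fps_X * ev Y G * (Bm' * (Pa * (Y - 1))) * (Y - 1) * Pb"
        by (simp add: K_def power2_eq_square mult_ac)
      also have "\<dots> = cm * fps_X * (cn * fps_X) * (ev Y G * (Y - 1) * Pb)" using Bm by (simp add: Bm'_def mult_ac)
      finally show ?thesis .
    qed
    have "(Bl'^2 + cm * fps_X * Bn' * ev Y H + cn * fps_X * Bm' * ev Y G) * K
       = cm * fps_X * (cn * fps_X) * (fps_const (1 / (of_nat a * of_nat b)) * Pa * Pb + ev Y H * (Y - 1) * Pa + ev Y G * (Y - 1) * Pb)"
      unfolding distrib_right distrib_left t1 t2 t3 c_def ..
    also have "\<dots> = cm * fps_X * (cn * fps_X)" using id[symmetric] by simp
    finally show ?thesis .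
  qed
  have "Bm' * Bn' = Bl'^2 + cm * fps_X * Bn' * ev Y H + cn * fps_X * Bm' * ev Y G"
    using L R K0 mult_right_cancel by metis
  thus ?thesis by (simp add: Bm'_def Bn'_def Bl'_def cm_def cn_def eG eH l_def)
qed

end
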